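(* Let $\alpha\le\omega$ and let $\mathcal A=((A_i,<_{A_i})\mid i<\alpha)$ and $\mathcal B=((B_i,<_{B_i})\mid i<\alpha)$ be sequences of countable linear orders shuffled by families $\mathcal S_A=(S^A_{i,j}\mid i<j<\alpha)$ and $\mathcal S_B=(S^B_{i,j}\mid i<j<\alpha)$ respectively. The following are equivalent: (1) the limit structures $(\bigsqcup_{\mathcal S_A}\mathcal A,\subset,\pi^A_i(A_i))_{i<\alpha}$ and $(\bigsqcup_{\mathcal S_B}\mathcal B,\subset,\pi^B_i(B_i))_{i<\alpha}$ are isomorphic; (2) there are order isomorphisms $f_i:A_i\to B_i$ ($i<\alpha$) such that for all $i<j<\alpha$, $x\in A_i$, $y\in A_j$: $(x,y)\in S^A_{i,j}$ iff $(f_i(x),f_j(y))\in S^B_{i,j}$; (3) $(A_i,<_{A_i})\cong(B_i,<_{B_i})$ for all $i<\alpha$.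
   Context: For a relation $S\subseteq X\times Y$, $S(X,y)=\{x:(x,y)\in S\}$ and $S(x,Y)=\{y:(x,y)\in S\}$. A shuffling relation between linear orders $(X,<_X),(Y,<_Y)$ is a non-empty $S\subseteq X\times Y$ such that (1) $(S(X,y)\mid y\in Y)$ is a strictly increasing sequence of initial segments of $X$, none of which has a supremum in $X$, and (2) $(S(x,Y)\mid x\in X)$ is a strictly decreasing sequence of final segments of $Y$. A family $(S_{i,j}\subseteq A_i\times A_j\mid i<j<\alpha)$ shuffles $((A_i,<_i)\mid i<\alpha)$ if each $S_{i,j}$ is a shuffling relation between $A_i$ and $A_j$ and $S_{j,k}\circ S_{i,j}=S_{i,k}$ for all $i<j<k<\alpha$ (composition: $(a,c)\in S_{j,k}\circ S_{i,j}$ iff there is $b$ with $(a,b)\in S_{i,j}$, $(b,c)\in S_{j,k}$). For a dense linear order $A_0$, $\mathfrak D(A_0)$ is the set of all topologically open initial segments of $A_0$ (including $\emptyset$, excluding $A_0$ if it has a maximum), ordered by $\subset$. The canonical maps are $\pi_0(x)=\{y\in A_0:y<x\}$ and $\pi_i(x)=S_{0,i}(A_0,x)$ for $i>0$; the limit structure is $\bigsqcup_{\mathcal S}\mathcal A=\bigcup_{i<\alpha}\pi_i(A_i)\subseteq\mathfrak D(A_0)$, ordered by $\subset$ and with a unary predicate for each $\pi_i(A_i)$. *)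

theory Defs
  imports Main "HOL-Library.Countable_Set" "HOL-Library.Extended_Nat"
begin

definition lin_ord :: "'a set \<Rightarrow> ('a \<times> 'a) set \<Rightarrow> bool" where
  "lin_ord X r \<longleftrightarrow> r \<subseteq> X \<times> X \<and> irrefl r \<and> trans r \<and> total_on X r"

definition order_iso :: "'a set \<Rightarrow> ('a \<times> 'a) set \<Rightarrow> 'b set \<Rightarrow> ('b \<times> 'b) set \<Rightarrow> ('a \<Rightarrow> 'b) \<Rightarrow> bool" where
  "order_iso X r Y s f \<longleftrightarrow> bij_betw f X Y \<and> (\<forall>x\<in>X. \<forall>y\<in>X. (x, y) \<in> r \<longleftrightarrow> (f x, f y) \<in> s)"

definition initial_seg :: "'a set \<Rightarrow> ('a \<times> 'a) set \<Rightarrow> 'a set \<Rightarrow> bool" where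
  "initial_seg X r U \<longleftrightarrow> U \<subseteq> X \<and> (\<forall>u\<in>U. \<forall>x\<in>X. (x, u) \<in> r \<longrightarrow> x \<in> U)"

definition final_seg :: "'a set \<Rightarrow> ('a \<times> 'a) set \<Rightarrow> 'a set \<Rightarrow> bool" where
  "final_seg X r U \<longleftrightarrow> U \<subseteq> X \<and> (\<forall>u\<in>U. \<forall>x\<in>X. (u, x) \<in> r \<longrightarrow> x \<in> U)"

definition is_sup_in :: "'a set \<Rightarrow> ('a \<times> 'a) set \<Rightarrow> 'a set \<Rightarrow> 'a \<Rightarrow> bool" where
  "is_sup_in X r U s \<longleftrightarrow> s \<in> X \<and> (\<forall>u\<in>U. u = s \<or> (u, s) \<in> r) \<and>
     (\<forall>t\<in>X. (\<forall>u\<in>U. u = t \<or> (u, t) \<in> r) \<longrightarrow> s = t \<or> (s, t) \<in> r)"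

definition sec_left :: "('a \<times> 'b) set \<Rightarrow> 'b \<Rightarrow> 'a set" where
  "sec_left S y = {x. (x, y) \<in> S}"

definition sec_right :: "('a \<times> 'b) set \<Rightarrow> 'a \<Rightarrow> 'b set" where
  "sec_right S x = {y. (x, y) \<in> S}"

definition shuffling :: "'a set \<Rightarrow> ('a \<times> 'a) set \<Rightarrow> 'b set \<Rightarrow> ('b \<times> 'b) set \<Rightarrow> ('a \<times> 'b) set \<Rightarrow> bool" where
  "shuffling X r Y s S \<longleftrightarrow> S \<noteq> {} \<and> S \<subseteq> X \<times> Y \<and>
     (\<forall>y\<in>Y. initial_seg X r (sec_left S y) \<and> \<not> (\<exists>z. is_sup_in X r (sec_left S y) z)) \<and>
     (\<forall>y\<in>Y. \<forall>y'\<in>Y. (y, y') \<in> s \<longrightarrow> sec_left S y \<subset> sec_left S y') \<and>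
     (\<forall>x\<in>X. final_seg Y s (sec_right S x)) \<and>
     (\<forall>x\<in>X. \<forall>x'\<in>X. (x, x') \<in> r \<longrightarrow> sec_right S x' \<subset> sec_right S x)"

text \<open>Families indexed by i < \<alpha>, with \<alpha> \<le> \<omega> represented as an extended natural.\<close>
definition shuffles :: "enat \<Rightarrow> (nat \<Rightarrow> 'a set) \<Rightarrow> (nat \<Rightarrow> ('a \<times> 'a) set) \<Rightarrow> (nat \<Rightarrow> nat \<Rightarrow> ('a \<times> 'a) set) \<Rightarrow> bool" where
  "shuffles \<alpha> A L S \<longleftrightarrow>
     (\<forall>i j. i < j \<and> enat j < \<alpha> \<longrightarrow> shuffling (A i) (L i) (A j) (L j) (S i j)) \<and>
     (\<forall>i j k. i < j \<and> j < k \<and> enat k < \<alpha> \<longrightarrow> S i j O S j k = S i k)"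

definition canon_map :: "(nat \<Rightarrow> ('a \<times> 'a) set) \<Rightarrow> (nat \<Rightarrow> nat \<Rightarrow> ('a \<times> 'a) set) \<Rightarrow> (nat \<Rightarrow> 'a set) \<Rightarrow> nat \<Rightarrow> 'a \<Rightarrow> 'a set" where
  "canon_map L S A i x = (if i = 0 then {y \<in> A 0. (y, x) \<in> L 0} else {a \<in> A 0. (a, x) \<in> S 0 i})"

definition pred_part :: "(nat \<Rightarrow> 'a set) \<Rightarrow> (nat \<Rightarrow> ('a \<times> 'a) set) \<Rightarrow> (nat \<Rightarrow> nat \<Rightarrow> ('a \<times> 'a) set) \<Rightarrow> nat \<Rightarrow> 'a set set" where
  "pred_part A L S i = canon_map L S A i ` A i"

definition limit_str :: "enat \<Rightarrow> (nat \<Rightarrow> 'a set) \<Rightarrow> (nat \<Rightarrow> ('a \<times> 'a) set) \<Rightarrow> (nat \<Rightarrow> nat \<Rightarrow> ('a \<times> 'a) set) \<Rightarrow> 'a set set" where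
  "limit_str \<alpha> A L S = (\<Union>i\<in>{i. enat i < \<alpha>}. pred_part A L S i)"

definition limit_iso :: "enat \<Rightarrow> (nat \<Rightarrow> 'a set) \<Rightarrow> (nat \<Rightarrow> ('a \<times> 'a) set) \<Rightarrow> (nat \<Rightarrow> nat \<Rightarrow> ('a \<times> 'a) set)
    \<Rightarrow> (nat \<Rightarrow> 'b set) \<Rightarrow> (nat \<Rightarrow> ('b \<times> 'b) set) \<Rightarrow> (nat \<Rightarrow> nat \<Rightarrow> ('b \<times> 'b) set) \<Rightarrow> ('a set \<Rightarrow> 'b set) \<Rightarrow> bool" where
  "limit_iso \<alpha> A LA SA B LB SB h \<longleftrightarrow>
     bij_betw h (limit_str \<alpha> A LA SA) (limit_str \<alpha> B LB SB) \<and>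
     (\<forall>U\<in>limit_str \<alpha> A LA SA. \<forall>V\<in>limit_str \<alpha> A LA SA. U \<subset> V \<longleftrightarrow> h U \<subset> h V) \<and>
     (\<forall>i. enat i < \<alpha> \<longrightarrow> (\<forall>U\<in>limit_str \<alpha> A LA SA. U \<in> pred_part A LA SA i \<longleftrightarrow> h U \<in> pred_part B LB SB i))"

end

theory Submission
  imports Defs
begin


lemma lo_total: "lin_ord X r \<Longrightarrow> x\<in>X \<Longrightarrow> y\<in>X \<Longrightarrow> x = y \<or> (x,y)\<in>r \<or> (y,x)\<in>r"
  unfolding lin_ord_def total_on_def by blast
lemma lo_irr: "lin_ord X r \<Longrightarrow> (x,x)\<notin>r"
  unfolding lin_ord_def irrefl_def by blast
lemma lo_trans: "lin_ord X r \<Longrightarrow> (x,y)\<in>r \<Longrightarrow> (y,z)\<in>r \<Longrightarrow> (x,z)\<in>r"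
  unfolding lin_ord_def trans_def by blast
lemma lo_asym: "lin_ord X r \<Longrightarrow> (x,y)\<in>r \<Longrightarrow> (y,x)\<notin>r"
proof
  assume "lin_ord X r" "(x,y)\<in>r" "(y,x)\<in>r"
  thus False using lo_trans[of X r x y x] lo_irr[of X r x] by blast
qed
lemma lo_sub: "lin_ord X r \<Longrightarrow> (x,y)\<in>r \<Longrightarrow> x\<in>X \<and> y\<in>X"
  unfolding lin_ord_def by blast

lemma nosup_nomax:
  assumes lo: "lin_ord X r" and ini: "initial_seg X r C" and ns: "\<not>(\<exists>z. is_sup_in X r C z)" and a: "a\<in>C"
  shows "\<exists>a'\<in>C. (a,a')\<in>r"
proof (rule ccontr)
  assume nn: "\<not> (\<exists>a'\<in>C. (a,a')\<in>r)"
  have aX: "a \<in> X" using ini a unfolding initial_seg_def by blast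
  have "is_sup_in X r C a"
    unfolding is_sup_in_def
  proof (intro conjI ballI impI)
    show "a \<in> X" by fact
    fix u assume u: "u\<in>C"
    hence "u\<in>X" using ini unfolding initial_seg_def by blast
    thus "u = a \<or> (u,a)\<in>r" using lo_total[OF lo aX] nn u by blast
  next
    fix t assume "t\<in>X" "\<forall>u\<in>C. u = t \<or> (u, t) \<in> r"
    thus "a = t \<or> (a,t)\<in>r" using a by blast
  qed
  thus False using ns by blast
qed

lemma init_chain:
  assumes lo: "lin_ord X r" and "initial_seg X r C" "initial_seg X r D"
  shows "C \<subseteq> D \<or> D \<subseteq> C"
proof (rule ccontr)
  assume "\<not> (C \<subseteq> D \<or> D \<subseteq> C)"
  then obtain a b where ab: "a\<in>C" "a\<notin>D" "b\<in>D" "b\<notin>C" by blast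
  hence X: "a\<in>X" "b\<in>X" using assms(2,3) unfolding initial_seg_def by blast+
  have iC: "\<forall>u\<in>C. \<forall>x\<in>X. (x, u) \<in> r \<longrightarrow> x \<in> C" using assms(2) unfolding initial_seg_def by blast
  have iD: "\<forall>u\<in>D. \<forall>x\<in>X. (x, u) \<in> r \<longrightarrow> x \<in> D" using assms(3) unfolding initial_seg_def by blast
  have "a = b \<or> (a,b)\<in>r \<or> (b,a)\<in>r" using lo_total[OF lo X] .
  then show False
  proof (elim disjE)
    assume "(a,b)\<in>r" thus False using iD ab X by blast
  next
    assume "(b,a)\<in>r" thus False using iC ab X by blast
  qed (use ab in blast)
qed

lemma abstract_K:
  assumes lo: "lin_ord X r"
    and mono: "\<And>x x'. x\<in>X \<Longrightarrow> x'\<in>X \<Longrightarrow> (x,x')\<in>r \<Longrightarrow> f x \<subset> f x'"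
    and ini: "initial_seg X r C" and ns: "\<not>(\<exists>z. is_sup_in X r C z)"
    and V: "V = \<Union>(f ` C)" and x: "x \<in> X"
  shows "(f x \<subset> V \<longleftrightarrow> x \<in> C) \<and> (V \<subset> f x \<longleftrightarrow> x \<notin> C) \<and> f x \<noteq> V"
proof -
  have CX: "C \<subseteq> X" using ini unfolding initial_seg_def by blast
  have A1: "f x \<subset> V" if xC: "x \<in> C"
  proof -
    obtain x' where "x'\<in>C" "(x,x')\<in>r" using nosup_nomax[OF lo ini ns xC] by blast
    hence "f x \<subset> f x'" using mono CX x by blast
    thus ?thesis using V \<open>x'\<in>C\<close> by blast
  qed
  have iC: "\<forall>u\<in>C. \<forall>x\<in>X. (x, u) \<in> r \<longrightarrow> x \<in> C" using ini unfolding initial_seg_def by blast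
  have below: "(z,x)\<in>r" if nc: "x \<notin> C" and zC: "z\<in>C" for z
  proof -
    have "z\<in>X" using zC CX by blast
    hence "z = x \<or> (z,x)\<in>r \<or> (x,z)\<in>r" using lo_total[OF lo _ x] by blast
    thus ?thesis using iC nc zC x by blast
  qed
  have A2: "V \<subset> f x" if nc: "x \<notin> C"
  proof -
    have sub: "V \<subseteq> f x" using V below[OF nc] mono CX x by blast
    have "V \<noteq> f x"
    proof
      assume eq: "V = f x"
      have "is_sup_in X r C x"
        unfolding is_sup_in_def
      proof (intro conjI ballI impI)
        show "x\<in>X" by fact
        fix u assume "u\<in>C" thus "u = x \<or> (u,x)\<in>r" using below[OF nc] by blast
      next
        fix t assume t: "t\<in>X" "\<forall>u\<in>C. u = t \<or> (u, t) \<in> r"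
        show "x = t \<or> (x,t)\<in>r"
        proof (rule ccontr)
          assume "\<not> (x = t \<or> (x,t)\<in>r)"
          hence tx: "(t,x)\<in>r" using lo_total[OF lo t(1) x] by blast
          hence "f t \<subset> V" using mono t(1) x eq by blast
          then obtain e where e: "e \<in> V" "e \<notin> f t" by blast
          then obtain z where z: "z\<in>C" "e \<in> f z" using V by blast
          have "z = t \<or> (z,t)\<in>r" using t(2) z(1) by blast
          hence "f z \<subseteq> f t"
          proof
            assume "(z,t)\<in>r" thus ?thesis using mono[of z t] CX z(1) t(1) by blast
          qed simp
          thus False using e z by blast
        qed
      qed
      thus False using ns by blast
    qed
    thus ?thesis using sub by blast
  qed
  show ?thesis using A1 A2 by blast
qed



lemma sh_sub: "shuffling X r Y s S \<Longrightarrow> S \<subseteq> X \<times> Y" unfolding shuffling_def by blast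
lemma sh_ne: "shuffling X r Y s S \<Longrightarrow> S \<noteq> {}" unfolding shuffling_def by blast
lemma sh_ini: "shuffling X r Y s S \<Longrightarrow> y\<in>Y \<Longrightarrow> initial_seg X r (sec_left S y)" unfolding shuffling_def by blast
lemma sh_ns: "shuffling X r Y s S \<Longrightarrow> y\<in>Y \<Longrightarrow> \<not>(\<exists>z. is_sup_in X r (sec_left S y) z)" unfolding shuffling_def by blast
lemma sh_incr: "shuffling X r Y s S \<Longrightarrow> y\<in>Y \<Longrightarrow> y'\<in>Y \<Longrightarrow> (y,y')\<in>s \<Longrightarrow> sec_left S y \<subset> sec_left S y'"
  unfolding shuffling_def by blast
lemma sh_decr: "shuffling X r Y s S \<Longrightarrow> x\<in>X \<Longrightarrow> x'\<in>X \<Longrightarrow> (x,x')\<in>r \<Longrightarrow> sec_right S x' \<subset> sec_right S x"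
  unfolding shuffling_def by blast

locale shuf =
  fixes \<alpha> :: enat and A :: "nat \<Rightarrow> 'a set" and L :: "nat \<Rightarrow> ('a\<times>'a) set" and S :: "nat \<Rightarrow> nat \<Rightarrow> ('a\<times>'a) set"
  assumes lin: "\<And>i. enat i < \<alpha> \<Longrightarrow> lin_ord (A i) (L i)" and sh: "shuffles \<alpha> A L S"
begin

abbreviation "cm \<equiv> canon_map L S A"
abbreviation "U \<equiv> limit_str \<alpha> A L S"
abbreviation "P \<equiv> pred_part A L S"

lemma shf: "i<j \<Longrightarrow> enat j<\<alpha> \<Longrightarrow> shuffling (A i) (L i) (A j) (L j) (S i j)"
  using sh unfolding shuffles_def by blast
lemma comp: "i<j \<Longrightarrow> j<k \<Longrightarrow> enat k<\<alpha> \<Longrightarrow> S i j O S j k = S i k"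
  using sh unfolding shuffles_def by blast
lemma lt_alpha: "enat j < \<alpha> \<Longrightarrow> i \<le> j \<Longrightarrow> enat i < \<alpha>"
  by (meson enat_ord_simps(1) order_le_less_trans)

lemma cm0: "cm 0 x = {y\<in>A 0. (y,x)\<in>L 0}" unfolding canon_map_def by simp
lemma piS: "0<i \<Longrightarrow> enat i<\<alpha> \<Longrightarrow> cm i x = sec_left (S 0 i) x"
  using sh_sub[OF shf[of 0 i]] unfolding canon_map_def sec_left_def by auto

lemma pi_ini: assumes "enat i<\<alpha>" "x\<in>A i" shows "initial_seg (A 0) (L 0) (cm i x)"
proof (cases "i = 0")
  case True
  have lo: "lin_ord (A 0) (L 0)" using lin assms True by simp
  show ?thesis unfolding True cm0 initial_seg_def using lo_trans[OF lo] by blast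
next
  case False
  thus ?thesis using piS[of i x] assms sh_ini[OF shf[of 0 i]] by simp
qed

lemma pi_sub: "enat i<\<alpha> \<Longrightarrow> x\<in>A i \<Longrightarrow> cm i x \<subseteq> A 0"
  using pi_ini unfolding initial_seg_def by blast

lemma pi_mono: assumes "enat i<\<alpha>" "x\<in>A i" "x'\<in>A i" "(x,x')\<in>L i" shows "cm i x \<subset> cm i x'"
proof (cases "i = 0")
  case True
  have lo: "lin_ord (A 0) (L 0)" using lin assms True by simp
  have "cm 0 x \<subseteq> cm 0 x'" unfolding cm0 using lo_trans[OF lo] assms True by blast
  moreover have "x \<in> cm 0 x' - cm 0 x" unfolding cm0 using assms True lo_irr[OF lo] by auto
  ultimately show ?thesis using True by blast
next
  case False
  thus ?thesis using piS[of i] assms sh_incr[OF shf[of 0 i]] by simp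
qed

lemma same: assumes "enat i<\<alpha>" "x\<in>A i" "x'\<in>A i"
  shows "(cm i x \<subset> cm i x' \<longleftrightarrow> (x,x')\<in>L i) \<and> (cm i x = cm i x' \<longleftrightarrow> x = x')"
proof -
  have lo: "lin_ord (A i) (L i)" using lin assms by simp
  have "x = x' \<or> (x,x')\<in>L i \<or> (x',x)\<in>L i" using lo_total[OF lo assms(2,3)] .
  thus ?thesis using pi_mono[OF assms(1,2,3)] pi_mono[OF assms(1,3,2)] lo_irr[OF lo] lo_asym[OF lo] by blast
qed

lemma pi_union: assumes ij: "i<j" and j: "enat j<\<alpha>" and y: "y\<in>A j"
  shows "cm j y = \<Union>(cm i ` sec_left (S i j) y)"
proof (cases "i = 0")
  case True
  have j0: "0 < j" using ij True by simp
  have s: "shuffling (A 0) (L 0) (A j) (L j) (S 0 j)" using shf[OF j0 j] .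
  have lo: "lin_ord (A 0) (L 0)" using lin lt_alpha[OF j] by simp
  have ini: "initial_seg (A 0) (L 0) (sec_left (S 0 j) y)" using sh_ini[OF s y] .
  have ns: "\<not>(\<exists>z. is_sup_in (A 0) (L 0) (sec_left (S 0 j) y) z)" using sh_ns[OF s y] .
  have "sec_left (S 0 j) y = \<Union>(cm 0 ` sec_left (S 0 j) y)"
  proof
    show "sec_left (S 0 j) y \<subseteq> \<Union>(cm 0 ` sec_left (S 0 j) y)"
    proof
      fix a assume a: "a \<in> sec_left (S 0 j) y"
      obtain a' where a': "a'\<in>sec_left (S 0 j) y" "(a,a')\<in>L 0" using nosup_nomax[OF lo ini ns a] by blast
      have "a \<in> cm 0 a'" unfolding cm0 using a' lo_sub[OF lo] by blast
      thus "a \<in> \<Union>(cm 0 ` sec_left (S 0 j) y)" using a' by blast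
    qed
  next
    show "\<Union>(cm 0 ` sec_left (S 0 j) y) \<subseteq> sec_left (S 0 j) y"
      unfolding cm0 using ini unfolding initial_seg_def by blast
  qed
  thus ?thesis using piS[OF j0 j] True by simp
next
  case False
  hence i0: "0<i" by simp
  have j0: "0<j" using ij i0 by simp
  have "cm j y = sec_left (S 0 i O S i j) y" using piS[OF j0 j] comp[OF i0 ij j] by simp
  also have "\<dots> = \<Union>(cm i ` sec_left (S i j) y)"
    using piS[OF i0 lt_alpha[OF j]] ij unfolding sec_left_def by auto
  finally show ?thesis .
qed

lemma cross: assumes ij: "i<j" and j: "enat j<\<alpha>" and x: "x\<in>A i" and y: "y\<in>A j"
  shows "(cm i x \<subset> cm j y \<longleftrightarrow> (x,y)\<in>S i j) \<and> (cm j y \<subset> cm i x \<longleftrightarrow> (x,y)\<notin>S i j) \<and> cm i x \<noteq> cm j y"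
proof -
  have i: "enat i < \<alpha>" using lt_alpha[OF j] ij by simp
  have s: "shuffling (A i) (L i) (A j) (L j) (S i j)" using shf[OF ij j] .
  have lo: "lin_ord (A i) (L i)" using lin i by simp
  have "(cm i x \<subset> cm j y \<longleftrightarrow> x \<in> sec_left (S i j) y) \<and> (cm j y \<subset> cm i x \<longleftrightarrow> x \<notin> sec_left (S i j) y) \<and> cm i x \<noteq> cm j y"
    by (rule abstract_K[OF lo _ sh_ini[OF s y] sh_ns[OF s y] pi_union[OF ij j y] x])
       (use pi_mono[OF i] in blast)
  thus ?thesis unfolding sec_left_def by simp
qed

lemma U_iff: "w \<in> U \<longleftrightarrow> (\<exists>i. enat i<\<alpha> \<and> (\<exists>x\<in>A i. w = cm i x))"
  unfolding limit_str_def pred_part_def by blast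
lemma P_iff: "w \<in> P i \<longleftrightarrow> (\<exists>x\<in>A i. w = cm i x)"
  unfolding pred_part_def by blast
lemma P_U: "enat i<\<alpha> \<Longrightarrow> w \<in> P i \<Longrightarrow> w \<in> U"
  unfolding limit_str_def by blast

lemma U_ini: assumes "w\<in>U" shows "initial_seg (A 0) (L 0) w"
proof -
  obtain i x where "enat i<\<alpha>" "x\<in>A i" "w = cm i x" using assms U_iff by blast
  thus ?thesis using pi_ini by simp
qed

lemma alpha_pos: assumes "w\<in>U" shows "enat 0 < \<alpha>"
proof -
  obtain i x where "enat i<\<alpha>" using assms U_iff by blast
  thus ?thesis using lt_alpha by blast
qed

lemma U_chain: "w\<in>U \<Longrightarrow> w'\<in>U \<Longrightarrow> w \<subseteq> w' \<or> w' \<subseteq> w"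
  using init_chain[OF lin[OF alpha_pos] U_ini U_ini] by blast

lemma P_disj: assumes "i \<noteq> j" "enat i<\<alpha>" "enat j<\<alpha>" "w\<in>P i" shows "w \<notin> P j"
proof
  assume "w \<in> P j"
  then obtain y where y: "y\<in>A j" "w = cm j y" using P_iff by blast
  obtain x where x: "x\<in>A i" "w = cm i x" using assms P_iff by blast
  show False
  proof (cases "i<j")
    case True thus False using cross[OF True assms(3) x(1) y(1)] x y by simp
  next
    case False hence ji: "j<i" using assms by simp
    have "cm j y \<noteq> cm i x" using cross[OF ji assms(2) y(1) x(1)] by blast
    thus False using x(2) y(2) by simp
  qed
qed

end


lemma between:
  assumes lo: "lin_ord X r" and iw: "initial_seg X r w" and iw': "initial_seg X r w'" and iz: "initial_seg X r z"
    and a: "a\<in>w'" "a\<notin>w" and a'': "a''\<in>w'" "(a,a'')\<in>r" and az: "a\<in>z" "a''\<notin>z"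
  shows "w \<subset> z \<and> z \<subset> w'"
proof -
  have aX: "a\<in>X" "a''\<in>X" using lo_sub[OF lo a''(2)] by auto
  have "w \<subseteq> z"
  proof
    fix t assume t: "t\<in>w"
    hence tX: "t\<in>X" using iw unfolding initial_seg_def by blast
    have "t = a \<or> (t,a)\<in>r \<or> (a,t)\<in>r" using lo_total[OF lo tX aX(1)] .
    moreover have "(a,t)\<notin>r" using iw t a(2) aX unfolding initial_seg_def by blast
    ultimately have "(t,a)\<in>r" using t a(2) by blast
    thus "t\<in>z" using iz az(1) tX unfolding initial_seg_def by blast
  qed
  moreover have "z \<subseteq> w'"
  proof
    fix t assume t: "t\<in>z"
    hence tX: "t\<in>X" using iz unfolding initial_seg_def by blast
    have "t = a'' \<or> (t,a'')\<in>r \<or> (a'',t)\<in>r" using lo_total[OF lo tX aX(2)] .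
    moreover have "(a'',t)\<notin>r" using iz t az(2) aX unfolding initial_seg_def by blast
    ultimately have "(t,a'')\<in>r" using t az(2) by blast
    thus "t\<in>w'" using iw' a''(1) tX unfolding initial_seg_def by blast
  qed
  ultimately show ?thesis using a az a'' by blast
qed

definition "isminL \<alpha> A L S m \<longleftrightarrow> m\<in>limit_str \<alpha> A L S \<and> (\<forall>w\<in>limit_str \<alpha> A L S. m\<subseteq>w)"
definition "ismaxL \<alpha> A L S m \<longleftrightarrow> m\<in>limit_str \<alpha> A L S \<and> (\<forall>w\<in>limit_str \<alpha> A L S. w\<subseteq>m)"
definition "hasminL A L k \<longleftrightarrow> (\<exists>a\<in>A k. \<forall>x\<in>A k. x=a \<or> (a,x)\<in>L k)"
definition "hasmaxL A L k \<longleftrightarrow> (\<exists>a\<in>A k. \<forall>x\<in>A k. x=a \<or> (x,a)\<in>L k)"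

context shuf begin

abbreviation "isminU \<equiv> isminL \<alpha> A L S"
abbreviation "ismaxU \<equiv> ismaxL \<alpha> A L S"
abbreviation "hasmin \<equiv> hasminL A L"
abbreviation "hasmax \<equiv> hasmaxL A L"

lemma U_color: "w\<in>U \<Longrightarrow> \<exists>k. enat k<\<alpha> \<and> w\<in>P k"
  unfolding limit_str_def by blast

lemma lo0: "w\<in>U \<Longrightarrow> lin_ord (A 0) (L 0)" using lin alpha_pos by blast

context
  assumes two: "enat 1 < \<alpha>"
begin

lemma lo0': "lin_ord (A 0) (L 0)" using lin lt_alpha[OF two] by simp

lemma dense0: assumes a: "(a,a'')\<in>L 0" shows "\<exists>a'. (a,a')\<in>L 0 \<and> (a',a'')\<in>L 0"
proof -
  have s: "shuffling (A 0) (L 0) (A 1) (L 1) (S 0 1)" using shf[OF _ two] by simp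
  have aX: "a\<in>A 0" "a''\<in>A 0" using lo_sub[OF lo0' a] by auto
  obtain y where y: "(a,y)\<in>S 0 1" "(a'',y)\<notin>S 0 1"
    using sh_decr[OF s aX a] unfolding sec_right_def by blast
  have yA: "y\<in>A 1" using sh_sub[OF s] y(1) by blast
  have aC: "a\<in>sec_left (S 0 1) y" using y(1) unfolding sec_left_def by simp
  obtain a' where a': "a'\<in>sec_left (S 0 1) y" "(a,a')\<in>L 0"
    using nosup_nomax[OF lo0' sh_ini[OF s yA] sh_ns[OF s yA] aC] by blast
  have a'X: "a'\<in>A 0" using lo_sub[OF lo0' a'(2)] by simp
  have ini: "\<forall>u\<in>sec_left (S 0 1) y. \<forall>x\<in>A 0. (x, u) \<in> L 0 \<longrightarrow> x \<in> sec_left (S 0 1) y"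
    using sh_ini[OF s yA] unfolding initial_seg_def by blast
  have "a'' = a' \<or> (a'',a')\<in>L 0 \<or> (a',a'')\<in>L 0" using lo_total[OF lo0' aX(2) a'X] .
  moreover have "a''\<notin>sec_left (S 0 1) y" using y(2) unfolding sec_left_def by simp
  ultimately have "(a',a'')\<in>L 0" using ini a'(1) aX(2) by blast
  thus ?thesis using a'(2) by blast
qed

lemma pi_nomax: assumes i: "enat i<\<alpha>" and x: "x\<in>A i" and a: "a\<in>cm i x"
  shows "\<exists>a'\<in>cm i x. (a,a')\<in>L 0"
proof (cases "i=0")
  case True
  hence ax: "(a,x)\<in>L 0" "a\<in>A 0" using a cm0 by auto
  obtain a' where "(a,a')\<in>L 0" "(a',x)\<in>L 0" using dense0[OF ax(1)] by blast
  moreover have "a'\<in>A 0" using lo_sub[OF lo0' \<open>(a,a')\<in>L 0\<close>] by simp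
  ultimately show ?thesis using True cm0 by auto
next
  case False
  hence i0: "0<i" by simp
  have s: "shuffling (A 0) (L 0) (A i) (L i) (S 0 i)" using shf[OF i0 i] .
  show ?thesis using nosup_nomax[OF lo0' sh_ini[OF s x] sh_ns[OF s x]] a piS[OF i0 i] by simp
qed

lemma U_nomax: assumes w: "w\<in>U" and a: "a\<in>w" shows "\<exists>a'\<in>w. (a,a')\<in>L 0"
proof -
  obtain i x where "enat i<\<alpha>" "x\<in>A i" "w = cm i x" using w U_iff by blast
  thus ?thesis using pi_nomax a by blast
qed

lemma sep: assumes k: "enat k<\<alpha>" and a: "(a,a'')\<in>L 0"
  shows "\<exists>z\<in>P k. a\<in>z \<and> a''\<notin>z"
proof (cases "k=0")
  case True
  have aX: "a\<in>A 0" "a''\<in>A 0" using lo_sub[OF lo0' a] by auto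
  have "cm 0 a'' \<in> P 0" using P_iff aX by blast
  moreover have "a \<in> cm 0 a''" "a'' \<notin> cm 0 a''" using cm0 aX a lo_irr[OF lo0'] by auto
  ultimately show ?thesis using True by blast
next
  case False
  hence k0: "0<k" by simp
  have s: "shuffling (A 0) (L 0) (A k) (L k) (S 0 k)" using shf[OF k0 k] .
  have aX: "a\<in>A 0" "a''\<in>A 0" using lo_sub[OF lo0' a] by auto
  obtain y where y: "(a,y)\<in>S 0 k" "(a'',y)\<notin>S 0 k"
    using sh_decr[OF s aX a] unfolding sec_right_def by blast
  have yA: "y\<in>A k" using sh_sub[OF s] y(1) by blast
  have "cm k y \<in> P k" using P_iff yA by blast
  moreover have "a \<in> cm k y" "a'' \<notin> cm k y" using piS[OF k0 k] y unfolding sec_left_def by auto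
  ultimately show ?thesis by blast
qed

lemma dense: assumes k: "enat k<\<alpha>" and w: "w\<in>U" "w'\<in>U" "w\<subset>w'"
  shows "\<exists>z\<in>P k. w\<subset>z \<and> z\<subset>w'"
proof -
  obtain a where a: "a\<in>w'" "a\<notin>w" using w(3) by blast
  obtain a'' where a'': "a''\<in>w'" "(a,a'')\<in>L 0" using U_nomax[OF w(2) a(1)] by blast
  obtain z where z: "z\<in>P k" "a\<in>z" "a''\<notin>z" using sep[OF k a''(2)] by blast
  have "w \<subset> z \<and> z \<subset> w'"
    by (rule between[OF lo0' U_ini[OF w(1)] U_ini[OF w(2)] U_ini[OF P_U[OF k z(1)]] a a'' z(2,3)])
  thus ?thesis using z(1) by blast
qed

lemma minU: assumes k: "enat k<\<alpha>" shows "(\<exists>m\<in>P k. isminU m) \<longleftrightarrow> hasmin k"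
proof
  assume "\<exists>m\<in>P k. isminU m"
  then obtain m0 where m0: "m0\<in>P k" "isminU m0" by blast
  then obtain a where a: "a\<in>A k" and "m0 = cm k a" using P_iff by blast
  hence m: "isminU (cm k a)" using m0 by simp
  have lo: "lin_ord (A k) (L k)" using lin k by simp
  have "\<forall>x\<in>A k. x=a \<or> (a,x)\<in>L k"
  proof
    fix x assume x: "x\<in>A k"
    have "cm k a \<subseteq> cm k x" using m P_U[OF k] P_iff x unfolding isminL_def by blast
    moreover have "x = a \<or> (a,x)\<in>L k \<or> (x,a)\<in>L k" using lo_total[OF lo x a] by blast
    ultimately show "x=a \<or> (a,x)\<in>L k" using pi_mono[OF k x a] by blast
  qed
  thus "hasmin k" unfolding hasminL_def using a by blast
next
  assume "hasmin k"
  then obtain a where a: "a\<in>A k" and am: "\<forall>x\<in>A k. x=a \<or> (a,x)\<in>L k" unfolding hasminL_def by blast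
  have mP: "cm k a \<in> P k" using P_iff a by blast
  have "\<forall>w\<in>U. cm k a \<subseteq> w"
  proof
    fix w assume w: "w\<in>U"
    show "cm k a \<subseteq> w"
    proof (rule ccontr)
      assume "\<not> cm k a \<subseteq> w"
      hence "w \<subset> cm k a" using U_chain[OF w P_U[OF k mP]] by blast
      then obtain z where z: "z\<in>P k" "w\<subset>z" "z\<subset>cm k a" using dense[OF k w P_U[OF k mP]] by blast
      then obtain x where x: "x\<in>A k" "z = cm k x" using P_iff by blast
      have "x = a \<or> (a,x)\<in>L k" using am x(1) by blast
      thus False
      proof
        assume "x = a" thus False using z x by blast
      next
        assume "(a,x)\<in>L k" thus False using pi_mono[OF k a x(1)] z x by blast
      qed
    qed
  qed
  thus "\<exists>m\<in>P k. isminU m" using mP P_U[OF k mP] unfolding isminL_def by blast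
qed

lemma maxU: assumes k: "enat k<\<alpha>" shows "(\<exists>m\<in>P k. ismaxU m) \<longleftrightarrow> hasmax k"
proof
  assume "\<exists>m\<in>P k. ismaxU m"
  then obtain m0 where m0: "m0\<in>P k" "ismaxU m0" by blast
  then obtain a where a: "a\<in>A k" and "m0 = cm k a" using P_iff by blast
  hence m: "ismaxU (cm k a)" using m0 by simp
  have lo: "lin_ord (A k) (L k)" using lin k by simp
  have "\<forall>x\<in>A k. x=a \<or> (x,a)\<in>L k"
  proof
    fix x assume x: "x\<in>A k"
    have "cm k x \<subseteq> cm k a" using m P_U[OF k] P_iff x unfolding ismaxL_def by blast
    moreover have "x = a \<or> (a,x)\<in>L k \<or> (x,a)\<in>L k" using lo_total[OF lo x a] by blast
    ultimately show "x=a \<or> (x,a)\<in>L k" using pi_mono[OF k a x] by blast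
  qed
  thus "hasmax k" unfolding hasmaxL_def using a by blast
next
  assume "hasmax k"
  then obtain a where a: "a\<in>A k" and am: "\<forall>x\<in>A k. x=a \<or> (x,a)\<in>L k" unfolding hasmaxL_def by blast
  have mP: "cm k a \<in> P k" using P_iff a by blast
  have "\<forall>w\<in>U. w \<subseteq> cm k a"
  proof
    fix w assume w: "w\<in>U"
    show "w \<subseteq> cm k a"
    proof (rule ccontr)
      assume "\<not> w \<subseteq> cm k a"
      hence "cm k a \<subset> w" using U_chain[OF w P_U[OF k mP]] by blast
      then obtain z where z: "z\<in>P k" "cm k a\<subset>z" "z\<subset>w" using dense[OF k P_U[OF k mP] w] by blast
      then obtain x where x: "x\<in>A k" "z = cm k x" using P_iff by blast
      have "x = a \<or> (x,a)\<in>L k" using am x(1) by blast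
      thus False
      proof
        assume "x = a" thus False using z x by blast
      next
        assume "(x,a)\<in>L k" thus False using pi_mono[OF k x(1) a] z x by blast
      qed
    qed
  qed
  thus "\<exists>m\<in>P k. ismaxU m" using mP P_U[OF k mP] unfolding ismaxL_def by blast
qed

lemma two_elems: "\<exists>w\<in>U. \<exists>w'\<in>U. w \<subset> w'"
proof -
  have s: "shuffling (A 0) (L 0) (A 1) (L 1) (S 0 1)" using shf[OF _ two] by simp
  obtain a y where ay: "(a,y)\<in>S 0 1" using sh_ne[OF s] by auto
  have X: "a\<in>A 0" "y\<in>A 1" using ay sh_sub[OF s] by auto
  have U: "cm 0 a \<in> U" "cm 1 y \<in> U" using X U_iff lt_alpha[OF two] two by auto
  have "cm 0 a \<noteq> cm 1 y" using cross[OF _ two X] by simp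
  thus ?thesis using U U_chain[OF U] by blast
qed

end
end


lemma chain_max:
  assumes "finite F" "F \<noteq> {}" "\<forall>x\<in>F. \<forall>y\<in>F. x\<subseteq>y \<or> y\<subseteq>x"
  shows "\<exists>m\<in>F. \<forall>x\<in>F. x\<subseteq>(m::'a set)"
  using assms
proof (induction F rule: finite_ne_induct)
  case (singleton x) thus ?case by blast
next
  case (insert x F)
  then obtain m where m: "m\<in>F" "\<forall>y\<in>F. y\<subseteq>m" by blast
  have "x \<subseteq> m \<or> m \<subseteq> x" using insert.prems m(1) by blast
  thus ?case
  proof
    assume "x \<subseteq> m" thus ?thesis using m by blast
  next
    assume "m \<subseteq> x" thus ?thesis using m by blast
  qed
qed

lemma chain_min:
  assumes "finite F" "F \<noteq> {}" "\<forall>x\<in>F. \<forall>y\<in>F. x\<subseteq>y \<or> y\<subseteq>x"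
  shows "\<exists>m\<in>F. \<forall>x\<in>F. (m::'a set)\<subseteq>x"
  using assms
proof (induction F rule: finite_ne_induct)
  case (singleton x) thus ?case by blast
next
  case (insert x F)
  then obtain m where m: "m\<in>F" "\<forall>y\<in>F. m\<subseteq>y" by blast
  have "x \<subseteq> m \<or> m \<subseteq> x" using insert.prems m(1) by blast
  thus ?case
  proof
    assume "x \<subseteq> m" thus ?thesis using m by blast
  next
    assume "m \<subseteq> x" thus ?thesis using m by blast
  qed
qed

definition bf_step :: "('a\<times>'b) set \<Rightarrow> 'a set \<Rightarrow> 'b set \<Rightarrow> (('a\<times>'b) set \<Rightarrow> bool) \<Rightarrow> 'a \<Rightarrow> 'b \<Rightarrow> ('a\<times>'b) set" where
  "bf_step p X Y Q x y = (let p1 = insert (x, SOME y'. y'\<in>Y \<and> Q (insert (x,y') p)) p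
                          in insert (SOME x'. x'\<in>X \<and> Q (insert (x',y) p1), y) p1)"

lemma bf_step_props:
  assumes forth: "\<And>p x. Q p \<Longrightarrow> x\<in>X \<Longrightarrow> \<exists>y\<in>Y. Q (insert (x,y) p)"
    and bck: "\<And>p y. Q p \<Longrightarrow> y\<in>Y \<Longrightarrow> \<exists>x\<in>X. Q (insert (x,y) p)"
    and Qp: "Q p" and x: "x\<in>X" and y: "y\<in>Y"
  shows "Q (bf_step p X Y Q x y) \<and> p \<subseteq> bf_step p X Y Q x y \<and> bf_step p X Y Q x y - p \<subseteq> X\<times>Y
     \<and> (\<exists>y'. (x,y')\<in>bf_step p X Y Q x y) \<and> (\<exists>x'. (x',y)\<in>bf_step p X Y Q x y)"
proof -
  define y' where "y' = (SOME y'. y'\<in>Y \<and> Q (insert (x,y') p))"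
  have ey: "\<exists>y'. y'\<in>Y \<and> Q (insert (x,y') p)" using forth[OF Qp x] by blast
  have y': "y'\<in>Y \<and> Q (insert (x,y') p)" unfolding y'_def using someI_ex[OF ey] .
  define p1 where "p1 = insert (x,y') p"
  define x' where "x' = (SOME x'. x'\<in>X \<and> Q (insert (x',y) p1))"
  have ex: "\<exists>x'. x'\<in>X \<and> Q (insert (x',y) p1)" using bck[of p1 y] y' y p1_def by blast
  have x': "x'\<in>X \<and> Q (insert (x',y) p1)" unfolding x'_def using someI_ex[OF ex] .
  have eq: "bf_step p X Y Q x y = insert (x',y) p1" unfolding bf_step_def Let_def y'_def[symmetric] p1_def[symmetric] x'_def[symmetric] ..
  show ?thesis unfolding eq using x' y' p1_def x y by blast
qed

lemma back_forth:
  fixes X :: "'a set" and Y :: "'b set"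
  assumes cX: "countable X" and cY: "countable Y"
    and forth: "\<And>p x. Q p \<Longrightarrow> x\<in>X \<Longrightarrow> \<exists>y\<in>Y. Q (insert (x,y) p)"
    and bck: "\<And>p y. Q p \<Longrightarrow> y\<in>Y \<Longrightarrow> \<exists>x\<in>X. Q (insert (x,y) p)"
    and Q0: "Q {}"
  shows "\<exists>R. R \<subseteq> X\<times>Y \<and> (\<forall>x\<in>X. \<exists>y. (x,y)\<in>R) \<and> (\<forall>y\<in>Y. \<exists>x. (x,y)\<in>R) \<and> (\<forall>a\<in>R. \<forall>b\<in>R. \<exists>p. Q p \<and> a\<in>p \<and> b\<in>p)"
proof (cases "X = {} \<or> Y = {}")
  case True
  have "X = {} \<and> Y = {}"
  proof (cases "X = {}")
    case True thus ?thesis using bck[OF Q0] by blast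
  next
    case False thus ?thesis using \<open>X = {} \<or> Y = {}\<close> forth[OF Q0] by blast
  qed
  thus ?thesis by (intro exI[of _ "{}"]) simp
next
  case False
  hence ne: "X \<noteq> {}" "Y \<noteq> {}" by auto
  define ex where "ex = from_nat_into X"
  define ey where "ey = from_nat_into Y"
  have rx: "range ex = X" unfolding ex_def using range_from_nat_into[OF ne(1) cX] .
  have ry: "range ey = Y" unfolding ey_def using range_from_nat_into[OF ne(2) cY] .
  define q where "q = rec_nat {} (\<lambda>n p. bf_step p X Y Q (ex n) (ey n))"
  have q0: "q 0 = {}" unfolding q_def by simp
  have qS: "q (Suc n) = bf_step (q n) X Y Q (ex n) (ey n)" for n unfolding q_def by simp
  have exX: "ex n \<in> X" for n using rx by blast
  have eyY: "ey n \<in> Y" for n using ry by blast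
  have inv: "Q (q n) \<and> q n \<subseteq> X\<times>Y" for n
  proof (induction n)
    case 0 thus ?case using q0 Q0 by simp
  next
    case (Suc n)
    thus ?case unfolding qS using bf_step_props[OF forth bck _ exX eyY, of "q n" n n] by blast
  qed
  have step: "q n \<subseteq> q (Suc n)" for n
    unfolding qS using bf_step_props[OF forth bck _ exX eyY, of "q n" n n] inv by blast
  have mono: "m \<le> n \<Longrightarrow> q m \<subseteq> q n" for m n
    using lift_Suc_mono_le[of q, OF step] by blast
  define R where "R = (\<Union>n. q n)"
  show ?thesis
  proof (rule exI[of _ R], intro conjI ballI)
    show "R \<subseteq> X\<times>Y" unfolding R_def using inv by blast
  next
    fix x assume "x\<in>X"
    then obtain n where n: "x = ex n" using rx by blast
    have "\<exists>y'. (ex n,y')\<in>q (Suc n)" unfolding qS using bf_step_props[OF forth bck _ exX eyY, of "q n" n n] inv by blast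
    thus "\<exists>y. (x,y)\<in>R" unfolding R_def n by blast
  next
    fix y assume "y\<in>Y"
    then obtain n where n: "y = ey n" using ry by blast
    have "\<exists>x'. (x',ey n)\<in>q (Suc n)" unfolding qS using bf_step_props[OF forth bck _ exX eyY, of "q n" n n] inv by blast
    thus "\<exists>x. (x,y)\<in>R" unfolding R_def n by blast
  next
    fix a b assume "a\<in>R" "b\<in>R"
    then obtain m n where "a\<in>q m" "b\<in>q n" unfolding R_def by blast
    hence "a\<in>q (max m n)" "b\<in>q (max m n)" using mono[of m "max m n"] mono[of n "max m n"] by auto
    thus "\<exists>p. Q p \<and> a\<in>p \<and> b\<in>p" using inv by blast
  qed
qed



definition "selfc \<alpha> A LA SA B LB SB u v \<longleftrightarrow>
  (\<forall>i. enat i<\<alpha> \<longrightarrow> (u \<in> pred_part A LA SA i \<longleftrightarrow> v \<in> pred_part B LB SB i)) \<and>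
  (isminL \<alpha> A LA SA u \<longleftrightarrow> isminL \<alpha> B LB SB v) \<and> (ismaxL \<alpha> A LA SA u \<longleftrightarrow> ismaxL \<alpha> B LB SB v)"
definition "relc u v u' v' \<longleftrightarrow> (u \<subset> u' \<longleftrightarrow> v \<subset> v') \<and> (u' \<subset> u \<longleftrightarrow> v' \<subset> v) \<and> (u = u' \<longleftrightarrow> v = v')"
definition "good \<alpha> A LA SA B LB SB p \<longleftrightarrow> finite p \<and> p \<subseteq> limit_str \<alpha> A LA SA \<times> limit_str \<alpha> B LB SB \<and>
   (\<forall>x\<in>p. selfc \<alpha> A LA SA B LB SB (fst x) (snd x)) \<and> (\<forall>x\<in>p. \<forall>y\<in>p. relc (fst x) (snd x) (fst y) (snd y))"

lemma relc_sym: "relc u v u' v' \<longleftrightarrow> relc u' v' u v" unfolding relc_def by blast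
lemma relc_refl: "relc u v u v" unfolding relc_def by blast
lemma relc_swap: "relc v u v' u' \<longleftrightarrow> relc u v u' v'" unfolding relc_def by blast
lemma selfc_swap: "selfc \<alpha> B LB SB A LA SA v u \<longleftrightarrow> selfc \<alpha> A LA SA B LB SB u v" unfolding selfc_def by blast

lemma ball_conv: "(\<forall>x\<in>p\<inverse>. f (fst x) (snd x)) \<longleftrightarrow> (\<forall>x\<in>p. f (snd x) (fst x))"
proof
  assume H: "\<forall>x\<in>p\<inverse>. f (fst x) (snd x)"
  show "\<forall>x\<in>p. f (snd x) (fst x)"
  proof
    fix x assume "x\<in>p"
    hence "(snd x, fst x) \<in> p\<inverse>" by (cases x) simp
    from bspec[OF H this] show "f (snd x) (fst x)" by simp
  qed
next
  assume H: "\<forall>x\<in>p. f (snd x) (fst x)"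
  show "\<forall>x\<in>p\<inverse>. f (fst x) (snd x)"
  proof
    fix x assume "x\<in>p\<inverse>"
    hence "(snd x, fst x) \<in> p" by (cases x) simp
    from bspec[OF H this] show "f (fst x) (snd x)" by simp
  qed
qed

lemma ball_conv2: "(\<forall>x\<in>p\<inverse>. \<forall>y\<in>p\<inverse>. f (fst x) (snd x) (fst y) (snd y)) \<longleftrightarrow> (\<forall>x\<in>p. \<forall>y\<in>p. f (snd x) (fst x) (snd y) (fst y))"
proof
  assume H: "\<forall>x\<in>p\<inverse>. \<forall>y\<in>p\<inverse>. f (fst x) (snd x) (fst y) (snd y)"
  show "\<forall>x\<in>p. \<forall>y\<in>p. f (snd x) (fst x) (snd y) (fst y)"
  proof (intro ballI)
    fix x y assume "x\<in>p" "y\<in>p"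
    hence "(snd x, fst x) \<in> p\<inverse>" "(snd y, fst y) \<in> p\<inverse>" by (cases x, simp, cases y, simp)
    from bspec[OF bspec[OF H this(1)] this(2)] show "f (snd x) (fst x) (snd y) (fst y)" by simp
  qed
next
  assume H: "\<forall>x\<in>p. \<forall>y\<in>p. f (snd x) (fst x) (snd y) (fst y)"
  show "\<forall>x\<in>p\<inverse>. \<forall>y\<in>p\<inverse>. f (fst x) (snd x) (fst y) (snd y)"
  proof (intro ballI)
    fix x y assume "x\<in>p\<inverse>" "y\<in>p\<inverse>"
    hence "(snd x, fst x) \<in> p" "(snd y, fst y) \<in> p" by (cases x, simp, cases y, simp)
    from bspec[OF bspec[OF H this(1)] this(2)] show "f (fst x) (snd x) (fst y) (snd y)" by simp
  qed
qed

lemma good_swap: "good \<alpha> B LB SB A LA SA (p\<inverse>) \<longleftrightarrow> good \<alpha> A LA SA B LB SB p"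
proof -
  have e1: "(\<forall>x\<in>p\<inverse>. selfc \<alpha> B LB SB A LA SA (fst x) (snd x)) \<longleftrightarrow> (\<forall>x\<in>p. selfc \<alpha> A LA SA B LB SB (fst x) (snd x))"
    unfolding ball_conv[of p "selfc \<alpha> B LB SB A LA SA"] by (rule ball_cong[OF refl], rule selfc_swap)
  have e2: "(\<forall>x\<in>p\<inverse>. \<forall>y\<in>p\<inverse>. relc (fst x) (snd x) (fst y) (snd y)) \<longleftrightarrow> (\<forall>x\<in>p. \<forall>y\<in>p. relc (fst x) (snd x) (fst y) (snd y))"
    unfolding ball_conv2[of p relc] by (rule ball_cong[OF refl], rule ball_cong[OF refl], rule relc_swap)
  have e3: "finite (p\<inverse>) \<longleftrightarrow> finite p" by simp
  have e4: "p\<inverse> \<subseteq> limit_str \<alpha> B LB SB \<times> limit_str \<alpha> A LA SA \<longleftrightarrow> p \<subseteq> limit_str \<alpha> A LA SA \<times> limit_str \<alpha> B LB SB" by auto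
  show ?thesis unfolding good_def by (simp only: e1 e2 e3 e4)
qed

lemma good_insert:
  assumes g: "good \<alpha> A LA SA B LB SB p" and uv: "u \<in> limit_str \<alpha> A LA SA" "v \<in> limit_str \<alpha> B LB SB"
    and s: "selfc \<alpha> A LA SA B LB SB u v" and r: "\<forall>x\<in>p. relc u v (fst x) (snd x)"
  shows "good \<alpha> A LA SA B LB SB (insert (u,v) p)"
proof -
  have r': "\<forall>x\<in>p. relc (fst x) (snd x) u v" using r relc_sym by blast
  have gg: "finite p" "p \<subseteq> limit_str \<alpha> A LA SA \<times> limit_str \<alpha> B LB SB"
     "\<forall>x\<in>p. selfc \<alpha> A LA SA B LB SB (fst x) (snd x)" "\<forall>x\<in>p. \<forall>y\<in>p. relc (fst x) (snd x) (fst y) (snd y)"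
    using g unfolding good_def by blast+
  have rr: "\<forall>x\<in>insert (u,v) p. \<forall>y\<in>insert (u,v) p. relc (fst x) (snd x) (fst y) (snd y)"
  proof (intro ballI)
    fix x y assume x: "x\<in>insert (u,v) p" and y: "y\<in>insert (u,v) p"
    show "relc (fst x) (snd x) (fst y) (snd y)"
    proof (cases "x = (u,v)")
      case True
      show ?thesis
      proof (cases "y = (u,v)")
        case True thus ?thesis using \<open>x = (u,v)\<close> relc_refl by simp
      next
        case False hence "y\<in>p" using y by blast
        thus ?thesis using \<open>x = (u,v)\<close> r by simp
      qed
    next
      case False hence xp: "x\<in>p" using x by blast
      show ?thesis
      proof (cases "y = (u,v)")
        case True thus ?thesis using xp r' by simp
      next
        case False hence "y\<in>p" using y by blast
        thus ?thesis using xp gg(4) by blast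
      qed
    qed
  qed
  show ?thesis unfolding good_def using gg uv s rr by auto
qed

locale two_shuf = A: shuf \<alpha> A LA SA + B: shuf \<alpha> B LB SB for \<alpha> A LA SA B LB SB +
  assumes two: "enat 1 < \<alpha>"
    and mins: "\<And>k. enat k<\<alpha> \<Longrightarrow> hasminL A LA k \<longleftrightarrow> hasminL B LB k"
    and maxs: "\<And>k. enat k<\<alpha> \<Longrightarrow> hasmaxL A LA k \<longleftrightarrow> hasmaxL B LB k"
begin

abbreviation "gd \<equiv> good \<alpha> A LA SA B LB SB"
abbreviation "sc \<equiv> selfc \<alpha> A LA SA B LB SB"

lemma colors_ok: assumes k: "enat k<\<alpha>" and u: "u\<in>A.P k" and v: "v\<in>B.P k"
  shows "\<forall>i. enat i<\<alpha> \<longrightarrow> (u\<in>A.P i \<longleftrightarrow> v\<in>B.P i)"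
proof (intro allI impI)
  fix i assume i: "enat i<\<alpha>"
  show "u\<in>A.P i \<longleftrightarrow> v\<in>B.P i"
  proof (cases "i = k")
    case True thus ?thesis using u v by simp
  next
    case False thus ?thesis using A.P_disj[OF _ k i u] B.P_disj[OF _ k i v] by blast
  qed
qed

lemma A_not_minmax: "isminL \<alpha> A LA SA u \<Longrightarrow> ismaxL \<alpha> A LA SA u \<Longrightarrow> False"
  using A.two_elems[OF two] unfolding isminL_def ismaxL_def by blast
lemma B_not_minmax: "isminL \<alpha> B LB SB u \<Longrightarrow> ismaxL \<alpha> B LB SB u \<Longrightarrow> False"
  using B.two_elems[OF two] unfolding isminL_def ismaxL_def by blast

lemma forth: assumes g: "gd p" and u: "u \<in> A.U" shows "\<exists>v\<in>B.U. gd (insert (u,v) p)"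
proof (cases "\<exists>v. (u,v)\<in>p")
  case True
  then obtain v where v: "(u,v)\<in>p" by blast
  hence "v\<in>B.U" using g unfolding good_def by blast
  moreover have eq: "insert (u,v) p = p" using v by blast
  have "gd (insert (u,v) p)" unfolding eq by (rule g)
  ultimately show ?thesis by blast
next
  case False
  hence nd: "\<And>a b. (a,b)\<in>p \<Longrightarrow> a \<noteq> u" by blast
  have pU: "\<And>a b. (a,b)\<in>p \<Longrightarrow> a\<in>A.U \<and> b\<in>B.U" using g unfolding good_def by blast
  have psc: "\<And>a b. (a,b)\<in>p \<Longrightarrow> sc a b" using g unfolding good_def by fastforce
  have prc: "\<And>a b a' b'. (a,b)\<in>p \<Longrightarrow> (a',b')\<in>p \<Longrightarrow> relc a b a' b'" using g unfolding good_def by fastforce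
  have fin: "finite p" using g unfolding good_def by blast
  obtain k where k: "enat k<\<alpha>" "u\<in>A.P k" using A.U_color[OF u] by blast
  show ?thesis
  proof (cases "isminL \<alpha> A LA SA u")
    case umin: True
    have "hasminL A LA k" using A.minU[OF two k(1)] k(2) umin by blast
    hence "hasminL B LB k" using mins[OF k(1)] by blast
    then obtain v where v: "v\<in>B.P k" "isminL \<alpha> B LB SB v" using B.minU[OF two k(1)] by blast
    have vU: "v\<in>B.U" using B.P_U[OF k(1) v(1)] .
    have s: "sc u v" unfolding selfc_def using colors_ok[OF k v(1)] umin v(2) A_not_minmax[OF umin] B_not_minmax[OF v(2)] by blast
    have r: "\<forall>x\<in>p. relc u v (fst x) (snd x)"
    proof
      fix x assume x: "x\<in>p"
      obtain a b where ab: "x = (a,b)" by (cases x)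
      have abp: "(a,b)\<in>p" using x ab by simp
      have au: "a \<noteq> u" using nd[OF abp] .
      have aU: "a\<in>A.U" "b\<in>B.U" using pU[OF abp] by auto
      have ua: "u \<subseteq> a" using umin aU unfolding isminL_def by blast
      have "\<not> isminL \<alpha> A LA SA a" using ua au umin unfolding isminL_def by blast
      hence "\<not> isminL \<alpha> B LB SB b" using psc[OF abp] unfolding selfc_def by blast
      moreover have vb: "v \<subseteq> b" using v(2) aU unfolding isminL_def by blast
      ultimately have "v \<noteq> b" using v(2) by blast
      thus "relc u v (fst x) (snd x)" unfolding ab relc_def using ua au vb by auto
    qed
    show ?thesis using good_insert[OF g u vU s r] vU by blast
  next
    case unmin: False
    show ?thesis
    proof (cases "ismaxL \<alpha> A LA SA u")
      case umax: True
      have "hasmaxL A LA k" using A.maxU[OF two k(1)] k(2) umax by blast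
      hence "hasmaxL B LB k" using maxs[OF k(1)] by blast
      then obtain v where v: "v\<in>B.P k" "ismaxL \<alpha> B LB SB v" using B.maxU[OF two k(1)] by blast
      have vU: "v\<in>B.U" using B.P_U[OF k(1) v(1)] .
      have s: "sc u v" unfolding selfc_def using colors_ok[OF k v(1)] umax v(2) A_not_minmax[OF _ umax] B_not_minmax[OF _ v(2)] by blast
      have r: "\<forall>x\<in>p. relc u v (fst x) (snd x)"
      proof
        fix x assume x: "x\<in>p"
        obtain a b where ab: "x = (a,b)" by (cases x)
        have abp: "(a,b)\<in>p" using x ab by simp
        have au: "a \<noteq> u" using nd[OF abp] .
        have aU: "a\<in>A.U" "b\<in>B.U" using pU[OF abp] by auto
        have ua: "a \<subseteq> u" using umax aU unfolding ismaxL_def by blast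
        have "\<not> ismaxL \<alpha> A LA SA a" using ua au umax unfolding ismaxL_def by blast
        hence "\<not> ismaxL \<alpha> B LB SB b" using psc[OF abp] unfolding selfc_def by blast
        moreover have vb: "b \<subseteq> v" using v(2) aU unfolding ismaxL_def by blast
        ultimately have "v \<noteq> b" using v(2) by blast
        thus "relc u v (fst x) (snd x)" unfolding ab relc_def using ua au vb by auto
      qed
      show ?thesis using good_insert[OF g u vU s r] vU by blast
    next
      case unmax: False
      define Lw where "Lw = {b. \<exists>a. (a,b)\<in>p \<and> a\<subset>u}"
      define Gw where "Gw = {b. \<exists>a. (a,b)\<in>p \<and> u\<subset>a}"
      have "Lw \<subseteq> snd ` p" "Gw \<subseteq> snd ` p" unfolding Lw_def Gw_def by (auto simp: image_iff, force+)
      hence Lwf: "finite Lw" "finite Gw" using finite_subset finite_imageI[OF fin, of snd] by blast+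
      have LwU: "Lw \<subseteq> B.U" "Gw \<subseteq> B.U" unfolding Lw_def Gw_def using pU by blast+
      have Lwc: "\<forall>x\<in>Lw. \<forall>y\<in>Lw. x\<subseteq>y \<or> y\<subseteq>x" "\<forall>x\<in>Gw. \<forall>y\<in>Gw. x\<subseteq>y \<or> y\<subseteq>x"
        using B.U_chain LwU by blast+
      have lnm: "\<And>a b. (a,b)\<in>p \<Longrightarrow> a\<subset>u \<Longrightarrow> \<not> ismaxL \<alpha> B LB SB b"
      proof -
        fix a b assume abp: "(a,b)\<in>p" and au: "a\<subset>u"
        have "\<not> ismaxL \<alpha> A LA SA a" using au u unfolding ismaxL_def by blast
        thus "\<not> ismaxL \<alpha> B LB SB b" using psc[OF abp] unfolding selfc_def by blast
      qed
      have gnm: "\<And>a b. (a,b)\<in>p \<Longrightarrow> u\<subset>a \<Longrightarrow> \<not> isminL \<alpha> B LB SB b"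
      proof -
        fix a b assume abp: "(a,b)\<in>p" and au: "u\<subset>a"
        have "\<not> isminL \<alpha> A LA SA a" using au u unfolding isminL_def by blast
        thus "\<not> isminL \<alpha> B LB SB b" using psc[OF abp] unfolding selfc_def by blast
      qed
      have ws: "\<exists>w1\<in>B.U. \<exists>w2\<in>B.U. w1\<subset>w2 \<and> (\<forall>b\<in>Lw. b\<subseteq>w1) \<and> (\<forall>b\<in>Gw. w2\<subseteq>b)"
      proof (cases "Lw = {}")
        case Lwe: True
        show ?thesis
        proof (cases "Gw = {}")
          case True thus ?thesis using Lwe B.two_elems[OF two] by blast
        next
          case False
          obtain bG where bG: "bG\<in>Gw" "\<forall>x\<in>Gw. bG\<subseteq>x" using chain_min[OF Lwf(2) False Lwc(2)] by blast
          obtain aG where aG: "(aG,bG)\<in>p" "u\<subset>aG" using bG(1) unfolding Gw_def by blast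
          have "\<not> isminL \<alpha> B LB SB bG" using gnm[OF aG] .
          moreover have bGU: "bG\<in>B.U" using pU[OF aG(1)] by blast
          ultimately obtain w1 where w1: "w1\<in>B.U" "\<not> bG \<subseteq> w1" unfolding isminL_def by blast
          hence "w1 \<subset> bG" using B.U_chain[OF w1(1) bGU] by blast
          thus ?thesis using w1(1) bGU bG Lwe by blast
        qed
      next
        case Lwn: False
        obtain bL where bL: "bL\<in>Lw" "\<forall>x\<in>Lw. x\<subseteq>bL" using chain_max[OF Lwf(1) Lwn Lwc(1)] by blast
        obtain aL where aL: "(aL,bL)\<in>p" "aL\<subset>u" using bL(1) unfolding Lw_def by blast
        have bLU: "bL\<in>B.U" using pU[OF aL(1)] by blast
        show ?thesis
        proof (cases "Gw = {}")
          case True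
          have "\<not> ismaxL \<alpha> B LB SB bL" using lnm[OF aL] .
          then obtain w2 where w2: "w2\<in>B.U" "\<not> w2 \<subseteq> bL" using bLU unfolding ismaxL_def by blast
          hence "bL \<subset> w2" using B.U_chain[OF w2(1) bLU] by blast
          thus ?thesis using w2(1) bLU bL True by blast
        next
          case False
          obtain bG where bG: "bG\<in>Gw" "\<forall>x\<in>Gw. bG\<subseteq>x" using chain_min[OF Lwf(2) False Lwc(2)] by blast
          obtain aG where aG: "(aG,bG)\<in>p" "u\<subset>aG" using bG(1) unfolding Gw_def by blast
          have bGU: "bG\<in>B.U" using pU[OF aG(1)] by blast
          have "aL \<subset> aG" using aL(2) aG(2) by blast
          hence "bL \<subset> bG" using prc[OF aL(1) aG(1)] unfolding relc_def by blast
          thus ?thesis using bLU bGU bL bG by blast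
        qed
      qed
      then obtain w1 w2 where w: "w1\<in>B.U" "w2\<in>B.U" "w1\<subset>w2" "\<forall>b\<in>Lw. b\<subseteq>w1" "\<forall>b\<in>Gw. w2\<subseteq>b" by blast
      obtain v where v: "v\<in>B.P k" "w1\<subset>v" "v\<subset>w2" using B.dense[OF two k(1) w(1,2,3)] by blast
      have vU: "v\<in>B.U" using B.P_U[OF k(1) v(1)] .
      have "\<not> isminL \<alpha> B LB SB v" using v(2) w(1) unfolding isminL_def by blast
      moreover have "\<not> ismaxL \<alpha> B LB SB v" using v(3) w(2) unfolding ismaxL_def by blast
      ultimately have s: "sc u v" unfolding selfc_def using colors_ok[OF k v(1)] unmin unmax by blast
      have r: "\<forall>x\<in>p. relc u v (fst x) (snd x)"
      proof
        fix x assume x: "x\<in>p"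
        obtain a b where ab: "x = (a,b)" by (cases x)
        have abp: "(a,b)\<in>p" using x ab by simp
        have au: "a \<noteq> u" using nd[OF abp] .
        have aU: "a\<in>A.U" using pU[OF abp] by auto
        have "a \<subset> u \<or> u \<subset> a" using A.U_chain[OF aU u] au by blast
        thus "relc u v (fst x) (snd x)"
        proof
          assume "a \<subset> u"
          hence "b\<in>Lw" unfolding Lw_def using abp by blast
          hence "b \<subset> v" using w(4) v(2) by blast
          thus ?thesis unfolding ab relc_def using \<open>a\<subset>u\<close> by auto
        next
          assume "u \<subset> a"
          hence "b\<in>Gw" unfolding Gw_def using abp by blast
          hence "v \<subset> b" using w(5) v(3) by blast
          thus ?thesis unfolding ab relc_def using \<open>u\<subset>a\<close> by auto
        qed
      qed
      show ?thesis using good_insert[OF g u vU s r] vU by blast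
    qed
  qed
qed

end

lemma two_shuf_swap: "two_shuf \<alpha> A LA SA B LB SB \<Longrightarrow> two_shuf \<alpha> B LB SB A LA SA"
  unfolding two_shuf_def two_shuf_axioms_def by blast

context two_shuf begin

lemma bck: assumes g: "gd p" and y: "y \<in> B.U" shows "\<exists>x\<in>A.U. gd (insert (x,y) p)"
proof -
  interpret S: two_shuf \<alpha> B LB SB A LA SA using two_shuf_swap[OF two_shuf_axioms] .
  have "good \<alpha> B LB SB A LA SA (p\<inverse>)" using good_swap g by blast
  then obtain x where x: "x\<in>A.U" "good \<alpha> B LB SB A LA SA (insert (y,x) (p\<inverse>))" using S.forth y by blast
  have "insert (y,x) (p\<inverse>) = (insert (x,y) p)\<inverse>" by blast
  thus ?thesis using x good_swap by metis
qed

lemma iso_exists: assumes cA: "countable A.U" and cB: "countable B.U"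
  shows "\<exists>h. limit_iso \<alpha> A LA SA B LB SB h"
proof -
  have g0: "gd {}" unfolding good_def by simp
  obtain R where R: "R \<subseteq> A.U \<times> B.U" "\<forall>x\<in>A.U. \<exists>y. (x,y)\<in>R" "\<forall>y\<in>B.U. \<exists>x. (x,y)\<in>R"
     "\<forall>a\<in>R. \<forall>b\<in>R. \<exists>p. gd p \<and> a\<in>p \<and> b\<in>p"
    using back_forth[OF cA cB forth bck g0] by blast
  have Rsc: "\<And>u v. (u,v)\<in>R \<Longrightarrow> sc u v" using R(4) unfolding good_def by fastforce
  have Rrc: "\<And>u v u' v'. (u,v)\<in>R \<Longrightarrow> (u',v')\<in>R \<Longrightarrow> relc u v u' v'"
  proof -
    fix u v u' v' assume "(u,v)\<in>R" "(u',v')\<in>R"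
    then obtain p where "gd p" "(u,v)\<in>p" "(u',v')\<in>p" using R(4) by blast
    thus "relc u v u' v'" unfolding good_def by fastforce
  qed
  define h where "h u = (SOME v. (u,v)\<in>R)" for u
  have hR: "u\<in>A.U \<Longrightarrow> (u, h u)\<in>R" for u unfolding h_def using R(2) someI_ex by metis
  have hB: "u\<in>A.U \<Longrightarrow> h u \<in> B.U" for u using hR R(1) by blast
  have bij: "bij_betw h A.U B.U"
    unfolding bij_betw_def
  proof (intro conjI)
    show "inj_on h A.U"
    proof (rule inj_onI)
      fix u u' assume "u\<in>A.U" "u'\<in>A.U" "h u = h u'"
      thus "u = u'" using Rrc[OF hR hR] unfolding relc_def by blast
    qed
    show "h ` A.U = B.U"
    proof
      show "h ` A.U \<subseteq> B.U" using hB by blast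
      show "B.U \<subseteq> h ` A.U"
      proof
        fix y assume "y\<in>B.U"
        then obtain x where x: "(x,y)\<in>R" using R(3) by blast
        hence xU: "x\<in>A.U" using R(1) by blast
        have "y = h x" using Rrc[OF x hR[OF xU]] unfolding relc_def by blast
        thus "y \<in> h ` A.U" using xU by blast
      qed
    qed
  qed
  have ord: "\<forall>U\<in>A.U. \<forall>V\<in>A.U. U \<subset> V \<longleftrightarrow> h U \<subset> h V"
    using Rrc[OF hR hR] unfolding relc_def by blast
  have col: "\<forall>i. enat i < \<alpha> \<longrightarrow> (\<forall>U\<in>A.U. U \<in> A.P i \<longleftrightarrow> h U \<in> B.P i)"
    using Rsc[OF hR] unfolding selfc_def by blast
  show ?thesis unfolding limit_iso_def using bij ord col by blast
qed

end


definition "relx L S i j x y = (if i<j then (x,y)\<in>S i j else if i = j then (x,y)\<in>L i else (y,x)\<notin>S j i)"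

context shuf begin

lemma cmp: assumes i: "enat i<\<alpha>" and j: "enat j<\<alpha>" and x: "x\<in>A i" and y: "y\<in>A j"
  shows "(cm i x \<subset> cm j y \<longleftrightarrow> relx L S i j x y) \<and> (cm i x = cm j y \<longleftrightarrow> i = j \<and> x = y)"
proof (cases "i<j")
  case True thus ?thesis using cross[OF True j x y] unfolding relx_def by simp
next
  case False
  show ?thesis
  proof (cases "i=j")
    case True thus ?thesis using same[OF i x] y unfolding relx_def by simp
  next
    case False
    hence ji: "j<i" using \<open>\<not> i<j\<close> by simp
    thus ?thesis using cross[OF ji i y x] \<open>\<not> i<j\<close> False unfolding relx_def by auto
  qed
qed

lemma cm_inj: "enat i<\<alpha> \<Longrightarrow> inj_on (cm i) (A i)"
  using same unfolding inj_on_def by blast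

lemma P_color_eq: assumes i: "enat i<\<alpha>" and k: "enat k<\<alpha>" and x: "x\<in>A i"
  shows "cm i x \<in> P k \<longleftrightarrow> k = i"
proof
  assume "cm i x \<in> P k"
  moreover have "cm i x \<in> P i" using P_iff x by blast
  ultimately show "k = i" using P_disj[OF _ i k] by blast
next
  assume "k = i" thus "cm i x \<in> P k" using P_iff x by blast
qed

lemma countable_U: assumes "\<And>i. enat i<\<alpha> \<Longrightarrow> countable (A i)" shows "countable U"
  unfolding limit_str_def pred_part_def
  by (rule countable_UN) (auto intro: countable_image assms)

end

lemma iso_inv: assumes "order_iso X r Y s g" shows "order_iso Y s X r (inv_into X g)"
proof -
  have b: "bij_betw g X Y" using assms unfolding order_iso_def by blast
  have bi: "bij_betw (inv_into X g) Y X" using bij_betw_inv_into[OF b] .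
  have "\<forall>x\<in>Y. \<forall>y\<in>Y. (x, y) \<in> s \<longleftrightarrow> (inv_into X g x, inv_into X g y) \<in> r"
  proof (intro ballI)
    fix x y assume xy: "x\<in>Y" "y\<in>Y"
    have X: "inv_into X g x \<in> X" "inv_into X g y \<in> X" using bi xy bij_betw_apply by metis+
    have e: "g (inv_into X g x) = x" "g (inv_into X g y) = y" using b xy bij_betw_inv_into_right by metis+
    have "(inv_into X g x, inv_into X g y) \<in> r \<longleftrightarrow> (g (inv_into X g x), g (inv_into X g y)) \<in> s"
      using assms X unfolding order_iso_def by blast
    thus "(x, y) \<in> s \<longleftrightarrow> (inv_into X g x, inv_into X g y) \<in> r" unfolding e by blast
  qed
  thus ?thesis unfolding order_iso_def using bi by blast
qed

lemma iso_min: assumes g: "order_iso X r Y s g" and m: "\<exists>a\<in>X. \<forall>x\<in>X. x=a \<or> (a,x)\<in>r"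
  shows "\<exists>b\<in>Y. \<forall>y\<in>Y. y=b \<or> (b,y)\<in>s"
proof -
  obtain a where a: "a\<in>X" "\<forall>x\<in>X. x=a \<or> (a,x)\<in>r" using m by blast
  have b: "bij_betw g X Y" using g unfolding order_iso_def by blast
  have "\<forall>y\<in>Y. y = g a \<or> (g a, y)\<in>s"
  proof
    fix y assume "y\<in>Y"
    then obtain x where x: "x\<in>X" "y = g x" using b unfolding bij_betw_def by blast
    have "x = a \<or> (a,x)\<in>r" using a x by blast
    moreover have "(a,x)\<in>r \<longleftrightarrow> (g a, g x)\<in>s" using g a(1) x(1) unfolding order_iso_def by blast
    ultimately show "y = g a \<or> (g a, y)\<in>s" using x(2) by blast
  qed
  thus ?thesis using b a(1) bij_betw_apply by metis
qed

lemma iso_max: assumes g: "order_iso X r Y s g" and m: "\<exists>a\<in>X. \<forall>x\<in>X. x=a \<or> (x,a)\<in>r"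
  shows "\<exists>b\<in>Y. \<forall>y\<in>Y. y=b \<or> (y,b)\<in>s"
proof -
  obtain a where a: "a\<in>X" "\<forall>x\<in>X. x=a \<or> (x,a)\<in>r" using m by blast
  have b: "bij_betw g X Y" using g unfolding order_iso_def by blast
  have "\<forall>y\<in>Y. y = g a \<or> (y, g a)\<in>s"
  proof
    fix y assume "y\<in>Y"
    then obtain x where x: "x\<in>X" "y = g x" using b unfolding bij_betw_def by blast
    have "x = a \<or> (x,a)\<in>r" using a x by blast
    moreover have "(x,a)\<in>r \<longleftrightarrow> (g x, g a)\<in>s" using g a(1) x(1) unfolding order_iso_def by blast
    ultimately show "y = g a \<or> (y, g a)\<in>s" using x(2) by blast
  qed
  thus ?thesis using b a(1) bij_betw_apply by metis
qed

locale pair = A: shuf \<alpha> A LA SA + B: shuf \<alpha> B LB SB for \<alpha> A LA SA B LB SB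
begin

lemma rel_pres:
  assumes f: "\<forall>i. enat i < \<alpha> \<longrightarrow> order_iso (A i) (LA i) (B i) (LB i) (f i)"
    and fS: "\<forall>i j. i < j \<and> enat j < \<alpha> \<longrightarrow> (\<forall>x\<in>A i. \<forall>y\<in>A j. (x, y) \<in> SA i j \<longleftrightarrow> (f i x, f j y) \<in> SB i j)"
    and i: "enat i<\<alpha>" and j: "enat j<\<alpha>" and x: "x\<in>A i" and y: "y\<in>A j"
  shows "relx LA SA i j x y \<longleftrightarrow> relx LB SB i j (f i x) (f j y)"
proof (cases "i<j")
  case True thus ?thesis using fS j x y unfolding relx_def by simp
next
  case False
  show ?thesis
  proof (cases "i=j")
    case True thus ?thesis using f i x y unfolding relx_def order_iso_def by simp
  next
    case False
    hence ji: "j<i" using \<open>\<not> i<j\<close> by simp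
    thus ?thesis using fS i x y \<open>\<not> i<j\<close> False unfolding relx_def by simp
  qed
qed

lemma two_to_one:
  assumes f: "\<forall>i. enat i < \<alpha> \<longrightarrow> order_iso (A i) (LA i) (B i) (LB i) (f i)"
    and fS: "\<forall>i j. i < j \<and> enat j < \<alpha> \<longrightarrow> (\<forall>x\<in>A i. \<forall>y\<in>A j. (x, y) \<in> SA i j \<longleftrightarrow> (f i x, f j y) \<in> SB i j)"
  shows "\<exists>h. limit_iso \<alpha> A LA SA B LB SB h"
proof -
  define h where "h W = (let i = SOME i. enat i<\<alpha> \<and> W\<in>A.P i in B.cm i (f i (inv_into (A i) (A.cm i) W)))" for W
  have fb: "\<And>i. enat i<\<alpha> \<Longrightarrow> bij_betw (f i) (A i) (B i)" using f unfolding order_iso_def by blast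
  have fA: "\<And>i x. enat i<\<alpha> \<Longrightarrow> x\<in>A i \<Longrightarrow> f i x \<in> B i" using fb bij_betw_apply by metis
  have hcm: "h (A.cm i x) = B.cm i (f i x)" if i: "enat i<\<alpha>" and x: "x\<in>A i" for i x
  proof -
    have ex: "\<exists>i'. enat i'<\<alpha> \<and> A.cm i x\<in>A.P i'" using i x A.P_iff by blast
    have "(SOME i'. enat i'<\<alpha> \<and> A.cm i x\<in>A.P i') = i"
    proof -
      define i' where "i' = (SOME i'. enat i'<\<alpha> \<and> A.cm i x\<in>A.P i')"
      have "enat i'<\<alpha> \<and> A.cm i x\<in>A.P i'" unfolding i'_def using someI_ex[OF ex] .
      thus ?thesis using A.P_color_eq[OF i _ x] unfolding i'_def by blast
    qed
    moreover have "inv_into (A i) (A.cm i) (A.cm i x) = x" using inv_into_f_f[OF A.cm_inj[OF i] x] .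
    ultimately show ?thesis unfolding h_def Let_def by simp
  qed
  have inj: "inj_on h A.U"
  proof (rule inj_onI)
    fix W W' assume W: "W\<in>A.U" "W'\<in>A.U" and eq: "h W = h W'"
    obtain i x where ix: "enat i<\<alpha>" "x\<in>A i" "W = A.cm i x" using W(1) A.U_iff by blast
    obtain j y where jy: "enat j<\<alpha>" "y\<in>A j" "W' = A.cm j y" using W(2) A.U_iff by blast
    have "B.cm i (f i x) = B.cm j (f j y)" using eq hcm ix jy by simp
    hence ij: "i = j" "f i x = f j y" using B.cmp[OF ix(1) jy(1) fA[OF ix(1,2)] fA[OF jy(1,2)]] by auto
    hence "x = y" using fb[OF ix(1)] ix(2) jy(2) unfolding bij_betw_def inj_on_def by blast
    thus "W = W'" using ix jy ij by simp
  qed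
  have img: "h ` A.U = B.U"
  proof
    show "h ` A.U \<subseteq> B.U"
    proof
      fix V assume "V \<in> h ` A.U"
      then obtain W where W: "W\<in>A.U" "V = h W" by blast
      then obtain i x where ix: "enat i<\<alpha>" "x\<in>A i" "W = A.cm i x" using A.U_iff by blast
      have "V = B.cm i (f i x)" using hcm[OF ix(1,2)] W(2) ix(3) by simp
      thus "V\<in>B.U" using B.U_iff ix(1) fA[OF ix(1,2)] by blast
    qed
    show "B.U \<subseteq> h ` A.U"
    proof
      fix V assume "V\<in>B.U"
      then obtain i b where ib: "enat i<\<alpha>" "b\<in>B i" "V = B.cm i b" using B.U_iff by blast
      then obtain a where a: "a\<in>A i" "b = f i a" using fb[OF ib(1)] unfolding bij_betw_def by blast
      have "A.cm i a \<in> A.U" using A.U_iff ib(1) a(1) by blast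
      thus "V \<in> h ` A.U" using hcm[OF ib(1) a(1)] ib a by force
    qed
  qed
  have ord: "\<forall>W\<in>A.U. \<forall>W'\<in>A.U. W \<subset> W' \<longleftrightarrow> h W \<subset> h W'"
  proof (intro ballI)
    fix W W' assume W: "W\<in>A.U" "W'\<in>A.U"
    obtain i x where ix: "enat i<\<alpha>" "x\<in>A i" "W = A.cm i x" using W(1) A.U_iff by blast
    obtain j y where jy: "enat j<\<alpha>" "y\<in>A j" "W' = A.cm j y" using W(2) A.U_iff by blast
    have "W \<subset> W' \<longleftrightarrow> relx LA SA i j x y" using A.cmp[OF ix(1) jy(1) ix(2) jy(2)] ix jy by simp
    also have "\<dots> \<longleftrightarrow> relx LB SB i j (f i x) (f j y)" using rel_pres[OF f fS ix(1) jy(1) ix(2) jy(2)] .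
    also have "\<dots> \<longleftrightarrow> h W \<subset> h W'" using B.cmp[OF ix(1) jy(1) fA[OF ix(1,2)] fA[OF jy(1,2)]] hcm ix jy by simp
    finally show "W \<subset> W' \<longleftrightarrow> h W \<subset> h W'" .
  qed
  have col: "\<forall>k. enat k < \<alpha> \<longrightarrow> (\<forall>W\<in>A.U. W \<in> A.P k \<longleftrightarrow> h W \<in> B.P k)"
  proof (intro allI impI ballI)
    fix k W assume k: "enat k<\<alpha>" and W: "W\<in>A.U"
    obtain i x where ix: "enat i<\<alpha>" "x\<in>A i" "W = A.cm i x" using W A.U_iff by blast
    show "W \<in> A.P k \<longleftrightarrow> h W \<in> B.P k"
      using A.P_color_eq[OF ix(1) k ix(2)] B.P_color_eq[OF ix(1) k fA[OF ix(1,2)]] hcm[OF ix(1,2)] ix(3) by simp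
  qed
  have "limit_iso \<alpha> A LA SA B LB SB h" unfolding limit_iso_def bij_betw_def by (intro conjI inj img ord col)
  thus ?thesis by blast
qed

lemma one_to_two:
  assumes h: "limit_iso \<alpha> A LA SA B LB SB h"
  shows "\<exists>f. (\<forall>i. enat i < \<alpha> \<longrightarrow> order_iso (A i) (LA i) (B i) (LB i) (f i)) \<and>
                (\<forall>i j. i < j \<and> enat j < \<alpha> \<longrightarrow>
                   (\<forall>x\<in>A i. \<forall>y\<in>A j. (x, y) \<in> SA i j \<longleftrightarrow> (f i x, f j y) \<in> SB i j))"
proof -
  have H: "bij_betw h A.U B.U \<and> (\<forall>W\<in>A.U. \<forall>W'\<in>A.U. W \<subset> W' \<longleftrightarrow> h W \<subset> h W') \<and>
     (\<forall>k. enat k < \<alpha> \<longrightarrow> (\<forall>W\<in>A.U. W \<in> A.P k \<longleftrightarrow> h W \<in> B.P k))"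
    using h unfolding limit_iso_def .
  have hb: "bij_betw h A.U B.U" using H by (rule conjunct1)
  have ho: "\<forall>W\<in>A.U. \<forall>W'\<in>A.U. W \<subset> W' \<longleftrightarrow> h W \<subset> h W'" using H by (rule conjunct1[OF conjunct2])
  have hc: "\<forall>k. enat k < \<alpha> \<longrightarrow> (\<forall>W\<in>A.U. W \<in> A.P k \<longleftrightarrow> h W \<in> B.P k)" using H by (rule conjunct2[OF conjunct2])
  define f where "f i x = inv_into (B i) (B.cm i) (h (A.cm i x))" for i x
  have fprop: "f i x \<in> B i \<and> B.cm i (f i x) = h (A.cm i x)" if i: "enat i<\<alpha>" and x: "x\<in>A i" for i x
  proof -
    have U: "A.cm i x \<in> A.U" using A.U_iff i x by blast
    have "A.cm i x \<in> A.P i" using A.P_iff x by blast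
    hence "h (A.cm i x) \<in> B.P i" using hc i U by blast
    hence "h (A.cm i x) \<in> B.cm i ` B i" unfolding pred_part_def .
    thus ?thesis unfolding f_def using inv_into_into f_inv_into_f by metis
  qed
  have cmU: "\<And>i x. enat i<\<alpha> \<Longrightarrow> x\<in>A i \<Longrightarrow> A.cm i x \<in> A.U" using A.U_iff by blast
  have key: "A.cm i x \<subset> A.cm j y \<longleftrightarrow> B.cm i (f i x) \<subset> B.cm j (f j y)"
    if "enat i<\<alpha>" "enat j<\<alpha>" "x\<in>A i" "y\<in>A j" for i j x y
    using ho cmU[OF that(1,3)] cmU[OF that(2,4)] fprop[OF that(1,3)] fprop[OF that(2,4)] by simp
  have iso: "order_iso (A i) (LA i) (B i) (LB i) (f i)" if i: "enat i<\<alpha>" for i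
  proof -
    have inj: "inj_on (f i) (A i)"
    proof (rule inj_onI)
      fix x x' assume x: "x\<in>A i" "x'\<in>A i" "f i x = f i x'"
      hence "h (A.cm i x) = h (A.cm i x')" using fprop[OF i] by metis
      hence "A.cm i x = A.cm i x'" using hb cmU[OF i x(1)] cmU[OF i x(2)] unfolding bij_betw_def inj_on_def by blast
      thus "x = x'" using A.same[OF i x(1,2)] by blast
    qed
    have img: "f i ` A i = B i"
    proof
      show "f i ` A i \<subseteq> B i" using fprop[OF i] by blast
      show "B i \<subseteq> f i ` A i"
      proof
        fix b assume b: "b\<in>B i"
        have "B.cm i b \<in> B.U" using B.U_iff i b by blast
        moreover have "h ` A.U = B.U" using hb by (simp add: bij_betw_def)
        ultimately have "B.cm i b \<in> h ` A.U" by simp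
        then obtain W where W: "W\<in>A.U" "h W = B.cm i b" by (auto simp: image_iff)
        have "B.cm i b \<in> B.P i" using B.P_iff b by blast
        hence "h W \<in> B.P i" using W(2) by simp
        moreover have "W \<in> A.P i \<longleftrightarrow> h W \<in> B.P i" using hc i W(1) by blast
        ultimately have "W \<in> A.P i" by blast
        then obtain a where a: "a\<in>A i" "W = A.cm i a" using A.P_iff by blast
        have "B.cm i (f i a) = B.cm i b" using fprop[OF i a(1)] W a by simp
        hence "f i a = b" using B.same[OF i _ b] fprop[OF i a(1)] by blast
        thus "b \<in> f i ` A i" using a by blast
      qed
    qed
    have "\<forall>x\<in>A i. \<forall>y\<in>A i. (x, y) \<in> LA i \<longleftrightarrow> (f i x, f i y) \<in> LB i"
    proof (intro ballI)
      fix x y assume xy: "x\<in>A i" "y\<in>A i"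
      show "(x, y) \<in> LA i \<longleftrightarrow> (f i x, f i y) \<in> LB i"
        using A.same[OF i xy] B.same[OF i, of "f i x" "f i y"] fprop[OF i xy(1)] fprop[OF i xy(2)] key[OF i i xy] by blast
    qed
    thus ?thesis unfolding order_iso_def bij_betw_def using inj img by blast
  qed
  have "\<forall>i j. i < j \<and> enat j < \<alpha> \<longrightarrow> (\<forall>x\<in>A i. \<forall>y\<in>A j. (x, y) \<in> SA i j \<longleftrightarrow> (f i x, f j y) \<in> SB i j)"
  proof (intro allI impI ballI)
    fix i j x y assume ij: "i < j \<and> enat j < \<alpha>" and x: "x\<in>A i" and y: "y\<in>A j"
    have i: "enat i<\<alpha>" using A.lt_alpha[of j i] ij by simp
    show "(x, y) \<in> SA i j \<longleftrightarrow> (f i x, f j y) \<in> SB i j"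
      using A.cross[OF conjunct1[OF ij] conjunct2[OF ij] x y] B.cross[OF conjunct1[OF ij] conjunct2[OF ij], of "f i x" "f j y"]
        fprop[OF i x] fprop[OF conjunct2[OF ij] y] key[OF i conjunct2[OF ij] x y] by blast
  qed
  thus ?thesis using iso by blast
qed

end


theorem proposition2:
  fixes \<alpha> :: enat
    and A :: "nat \<Rightarrow> 'a set" and LA :: "nat \<Rightarrow> ('a \<times> 'a) set" and SA :: "nat \<Rightarrow> nat \<Rightarrow> ('a \<times> 'a) set"
    and B :: "nat \<Rightarrow> 'b set" and LB :: "nat \<Rightarrow> ('b \<times> 'b) set" and SB :: "nat \<Rightarrow> nat \<Rightarrow> ('b \<times> 'b) set"
  assumes linA: "\<And>i. enat i < \<alpha> \<Longrightarrow> lin_ord (A i) (LA i) \<and> countable (A i)"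
    and linB: "\<And>i. enat i < \<alpha> \<Longrightarrow> lin_ord (B i) (LB i) \<and> countable (B i)"
    and shA: "shuffles \<alpha> A LA SA"
    and shB: "shuffles \<alpha> B LB SB"
  shows "((\<exists>h. limit_iso \<alpha> A LA SA B LB SB h) \<longleftrightarrow>
           (\<exists>f. (\<forall>i. enat i < \<alpha> \<longrightarrow> order_iso (A i) (LA i) (B i) (LB i) (f i)) \<and>
                (\<forall>i j. i < j \<and> enat j < \<alpha> \<longrightarrow>
                   (\<forall>x\<in>A i. \<forall>y\<in>A j. (x, y) \<in> SA i j \<longleftrightarrow> (f i x, f j y) \<in> SB i j)))) \<and>
         ((\<exists>f. (\<forall>i. enat i < \<alpha> \<longrightarrow> order_iso (A i) (LA i) (B i) (LB i) (f i)) \<and>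
                (\<forall>i j. i < j \<and> enat j < \<alpha> \<longrightarrow>
                   (\<forall>x\<in>A i. \<forall>y\<in>A j. (x, y) \<in> SA i j \<longleftrightarrow> (f i x, f j y) \<in> SB i j))) \<longleftrightarrow>
          (\<forall>i. enat i < \<alpha> \<longrightarrow> (\<exists>g. order_iso (A i) (LA i) (B i) (LB i) g)))"
proof -
  have sA: "shuf \<alpha> A LA SA" unfolding shuf_def using linA shA by blast
  have sB: "shuf \<alpha> B LB SB" unfolding shuf_def using linB shB by blast
  interpret A: shuf \<alpha> A LA SA by (rule sA)
  interpret B: shuf \<alpha> B LB SB by (rule sB)
  interpret P: pair \<alpha> A LA SA B LB SB unfolding pair_def using sA sB by blast
  let ?two = "\<exists>f. (\<forall>i. enat i < \<alpha> \<longrightarrow> order_iso (A i) (LA i) (B i) (LB i) (f i)) \<and>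
                (\<forall>i j. i < j \<and> enat j < \<alpha> \<longrightarrow>
                   (\<forall>x\<in>A i. \<forall>y\<in>A j. (x, y) \<in> SA i j \<longleftrightarrow> (f i x, f j y) \<in> SB i j))"
  have e12: "(\<exists>h. limit_iso \<alpha> A LA SA B LB SB h) \<longleftrightarrow> ?two"
  proof
    assume "\<exists>h. limit_iso \<alpha> A LA SA B LB SB h"
    then obtain h where "limit_iso \<alpha> A LA SA B LB SB h" by blast
    thus ?two by (rule P.one_to_two)
  next
    assume ?two
    then obtain f where f: "\<forall>i. enat i < \<alpha> \<longrightarrow> order_iso (A i) (LA i) (B i) (LB i) (f i)"
      "\<forall>i j. i < j \<and> enat j < \<alpha> \<longrightarrow> (\<forall>x\<in>A i. \<forall>y\<in>A j. (x, y) \<in> SA i j \<longleftrightarrow> (f i x, f j y) \<in> SB i j)"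
      by blast
    show "\<exists>h. limit_iso \<alpha> A LA SA B LB SB h" by (rule P.two_to_one[OF f])
  qed
  have e23: "?two \<longleftrightarrow> (\<forall>i. enat i < \<alpha> \<longrightarrow> (\<exists>g. order_iso (A i) (LA i) (B i) (LB i) g))"
  proof
    assume ?two thus "\<forall>i. enat i < \<alpha> \<longrightarrow> (\<exists>g. order_iso (A i) (LA i) (B i) (LB i) g)" by blast
  next
    assume H: "\<forall>i. enat i < \<alpha> \<longrightarrow> (\<exists>g. order_iso (A i) (LA i) (B i) (LB i) g)"
    show ?two
    proof (cases "enat 1 < \<alpha>")
      case two: True
      have mins: "hasminL A LA k \<longleftrightarrow> hasminL B LB k" if k: "enat k<\<alpha>" for k
      proof -
        obtain g where g: "order_iso (A k) (LA k) (B k) (LB k) g" using H k by blast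
        show ?thesis unfolding hasminL_def using iso_min[OF g] iso_min[OF iso_inv[OF g]] by blast
      qed
      have maxs: "hasmaxL A LA k \<longleftrightarrow> hasmaxL B LB k" if k: "enat k<\<alpha>" for k
      proof -
        obtain g where g: "order_iso (A k) (LA k) (B k) (LB k) g" using H k by blast
        show ?thesis unfolding hasmaxL_def using iso_max[OF g] iso_max[OF iso_inv[OF g]] by blast
      qed
      have T: "two_shuf \<alpha> A LA SA B LB SB"
        unfolding two_shuf_def two_shuf_axioms_def using sA sB two mins maxs by blast
      have cA: "countable A.U" using A.countable_U linA by blast
      have cB: "countable B.U" using B.countable_U linB by blast
      obtain h where "limit_iso \<alpha> A LA SA B LB SB h" using two_shuf.iso_exists[OF T cA cB] by blast
      thus ?two by (rule P.one_to_two)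
    next
      case False
      define f where "f i = (SOME g. order_iso (A i) (LA i) (B i) (LB i) g)" for i
      have "\<forall>i. enat i < \<alpha> \<longrightarrow> order_iso (A i) (LA i) (B i) (LB i) (f i)"
        unfolding f_def using H someI_ex by metis
      moreover have "\<forall>i j. i < j \<and> enat j < \<alpha> \<longrightarrow> (\<forall>x\<in>A i. \<forall>y\<in>A j. (x, y) \<in> SA i j \<longleftrightarrow> (f i x, f j y) \<in> SB i j)"
      proof (intro allI impI)
        fix i j :: nat assume ij: "i < j \<and> enat j < \<alpha>"
        hence "enat 1 < \<alpha>" using A.lt_alpha[of j 1] by simp
        thus "\<forall>x\<in>A i. \<forall>y\<in>A j. (x, y) \<in> SA i j \<longleftrightarrow> (f i x, f j y) \<in> SB i j" using False by blast
      qed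
      ultimately show ?two by blast
    qed
  qed
  show ?thesis using e12 e23 by blast
qed


end
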